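(* Fix $d\ge2$, $k\in\{1,\dots,d-1\}$ and $\theta\in[0,1)$. Let $\sigma_1\ge\dots\ge\sigma_d\ge0$ satisfy $\sigma_{k+2}=\dots=\sigma_d=0$ and $\sum_{j=1}^{k+1}\sigma_j^2=1$. If $\theta=0$ assume $\sigma_{k+1}=0$; if $\theta>0$ assume $\sigma_{k+1}\le\frac\theta k\sum_{j=1}^k\sigma_j$. Then $$\sum_{j=1}^{k+1}\sigma_j\le\frac{k+\theta}{\sqrt{k+\theta^2}},$$ with equality if and only if $\sigma_1=\dots=\sigma_k=\frac1{\sqrt{k+\theta^2}}$ and $\sigma_{k+1}=\frac\theta{\sqrt{k+\theta^2}}$. *)

theory Defs
  imports Complex_Main
begin

end

theory Submission
  imports Defs
begin

lemma var_id:
  fixes \<sigma> :: "nat \<Rightarrow> real" and k :: nat and m :: real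
  shows "(\<Sum>j=1..k. (\<sigma> j - m)\<^sup>2) = (\<Sum>j=1..k. (\<sigma> j)\<^sup>2) - 2*m*(\<Sum>j=1..k. \<sigma> j) + real k * m\<^sup>2"
  by (simp add: power2_diff sum.distrib sum_subtractf sum_distrib_left[symmetric] sum_distrib_right[symmetric] algebra_simps)

theorem lemma3p15:
  fixes d k :: nat and \<theta> :: real and \<sigma> :: "nat \<Rightarrow> real"
  assumes "d \<ge> 2" and "1 \<le> k" and "k \<le> d - 1"
    and "0 \<le> \<theta>" and "\<theta> < 1"
    and "\<And>i j. 1 \<le> i \<Longrightarrow> i \<le> j \<Longrightarrow> j \<le> d \<Longrightarrow> \<sigma> j \<le> \<sigma> i"
    and "\<sigma> d \<ge> 0"
    and "\<And>j. k + 2 \<le> j \<Longrightarrow> j \<le> d \<Longrightarrow> \<sigma> j = 0"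
    and "(\<Sum>j=1..k+1. (\<sigma> j)\<^sup>2) = 1"
    and "\<theta> = 0 \<Longrightarrow> \<sigma> (k+1) = 0"
    and "\<theta> > 0 \<Longrightarrow> \<sigma> (k+1) \<le> \<theta> / real k * (\<Sum>j=1..k. \<sigma> j)"
  shows "(\<Sum>j=1..k+1. \<sigma> j) \<le> (real k + \<theta>) / sqrt (real k + \<theta>\<^sup>2)
    \<and> ((\<Sum>j=1..k+1. \<sigma> j) = (real k + \<theta>) / sqrt (real k + \<theta>\<^sup>2)
       \<longleftrightarrow> (\<forall>j\<in>{1..k}. \<sigma> j = 1 / sqrt (real k + \<theta>\<^sup>2))
           \<and> \<sigma> (k+1) = \<theta> / sqrt (real k + \<theta>\<^sup>2))"
proof -
  define S where "S = (\<Sum>j=1..k. \<sigma> j)"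
  define Q where "Q = (\<Sum>j=1..k. (\<sigma> j)\<^sup>2)"
  define t where "t = \<sigma> (k+1)"
  define c where "c = sqrt (real k + \<theta>\<^sup>2)"
  have kpos: "real k > 0" using assms(2) by simp
  have c2: "c\<^sup>2 = real k + \<theta>\<^sup>2" unfolding c_def by (simp add: add_nonneg_nonneg)
  have cpos: "c > 0" unfolding c_def using kpos by (simp add: add_pos_nonneg)
  have sumeq: "(\<Sum>j=1..k+1. \<sigma> j) = S + t" unfolding S_def t_def by simp
  have Qt: "Q + t\<^sup>2 = 1" using assms(9) unfolding Q_def t_def by simp
  have t0: "t \<ge> 0"
  proof -
    have "\<sigma> d \<le> \<sigma> (k+1)" using assms(6)[of "k+1" d] assms(1,3) by simp
    then show ?thesis using assms(7) t_def by simp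
  qed
  have vid: "(\<Sum>j=1..k. (\<sigma> j - S / real k)\<^sup>2) = Q - S\<^sup>2 / real k"
    using var_id[of \<sigma> "S / real k" k] kpos unfolding S_def Q_def
    by (simp add: power2_eq_square field_simps)
  have vnn: "(\<Sum>j=1..k. (\<sigma> j - S / real k)\<^sup>2) \<ge> 0" by (simp add: sum_nonneg)
  have CS: "S\<^sup>2 \<le> real k * Q"
  proof -
    have "S\<^sup>2 / real k \<le> Q" using vid vnn by linarith
    then show ?thesis using kpos by (simp add: divide_le_eq mult.commute)
  qed
  have ktS: "real k * t \<le> \<theta> * S"
  proof (cases "\<theta> = 0")
    case True then show ?thesis using assms(10) t_def by simp
  next
    case False
    then have "t \<le> \<theta> / real k * S" using assms(4,11) t_def S_def by simp
    then show ?thesis using kpos by (simp add: field_simps)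
  qed
  have tb: "t \<le> \<theta> / c"
  proof -
    have "(real k * t)\<^sup>2 \<le> (\<theta> * S)\<^sup>2" using ktS t0 kpos by (intro power_mono) auto
    also have "\<dots> = \<theta>\<^sup>2 * S\<^sup>2" by (simp add: power_mult_distrib)
    also have "\<dots> \<le> \<theta>\<^sup>2 * (real k * (1 - t\<^sup>2))" proof -
      have "1 - t\<^sup>2 = Q" using Qt by linarith
      then show ?thesis using CS by (simp add: mult_left_mono)
    qed
    finally have "real k * (real k * t\<^sup>2) \<le> real k * (\<theta>\<^sup>2 * (1 - t\<^sup>2))"
      by (simp add: power_mult_distrib power2_eq_square algebra_simps)
    then have "real k * t\<^sup>2 \<le> \<theta>\<^sup>2 * (1 - t\<^sup>2)" using kpos by simp
    then have "t\<^sup>2 * c\<^sup>2 \<le> \<theta>\<^sup>2" using c2 by (simp add: algebra_simps)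
    then have "(t * c)\<^sup>2 \<le> \<theta>\<^sup>2" by (simp add: power_mult_distrib)
    then have "t * c \<le> \<theta>" using assms(4) power2_le_imp_le by blast
    then show ?thesis using cpos by (simp add: field_simps)
  qed
  have CS2: "(S + \<theta> * t)\<^sup>2 \<le> c\<^sup>2"
  proof -
    have a: "2 * \<theta> * S * t * real k \<le> (real k * t)\<^sup>2 + \<theta>\<^sup>2 * S\<^sup>2"
      using sum_squares_ge_zero[of "real k * t - \<theta> * S" 0]
      by (simp add: power2_eq_square algebra_simps)
    have "\<theta>\<^sup>2 * S\<^sup>2 \<le> \<theta>\<^sup>2 * (real k * Q)" using CS by (simp add: mult_left_mono)
    with a have "2 * \<theta> * S * t * real k \<le> real k * (real k * t\<^sup>2 + \<theta>\<^sup>2 * Q)"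
      by (simp add: power2_eq_square algebra_simps)
    then have b: "2 * \<theta> * S * t \<le> real k * t\<^sup>2 + \<theta>\<^sup>2 * Q" using kpos
      by (simp add: mult.commute)
    have "(S + \<theta> * t)\<^sup>2 = S\<^sup>2 + 2 * \<theta> * S * t + \<theta>\<^sup>2 * t\<^sup>2" by (simp add: power2_eq_square algebra_simps)
    also have "\<dots> \<le> real k * Q + (real k * t\<^sup>2 + \<theta>\<^sup>2 * Q) + \<theta>\<^sup>2 * t\<^sup>2" using CS b by simp
    also have "\<dots> = (real k + \<theta>\<^sup>2) * (Q + t\<^sup>2)" by (simp add: algebra_simps)
    also have "\<dots> = c\<^sup>2" using Qt c2 by simp
    finally show ?thesis .
  qed
  have L1: "S + \<theta> * t \<le> c" using CS2 cpos power2_le_imp_le by fastforce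
  have rhs: "(real k + \<theta>) / c = c + (1 - \<theta>) * (\<theta> / c)"
    using cpos c2 by (simp add: field_simps power2_eq_square)
  have main: "S + t \<le> (real k + \<theta>) / c"
  proof -
    have "(1 - \<theta>) * t \<le> (1 - \<theta>) * (\<theta> / c)" using tb assms(5) by (intro mult_left_mono) auto
    then show ?thesis using L1 rhs by (simp add: algebra_simps)
  qed
  have eqiff: "S + t = (real k + \<theta>) / c \<longleftrightarrow> (\<forall>j\<in>{1..k}. \<sigma> j = 1 / c) \<and> t = \<theta> / c"
  proof
    assume E: "S + t = (real k + \<theta>) / c"
    have "(1 - \<theta>) * t \<le> (1 - \<theta>) * (\<theta> / c)" using tb assms(5) by (intro mult_left_mono) auto
    have "(1 - \<theta>) * t = (1 - \<theta>) * (\<theta> / c)"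
    proof (rule antisym)
      show "(1 - \<theta>) * t \<le> (1 - \<theta>) * (\<theta> / c)" using tb assms(5) by (intro mult_left_mono) auto
      show "(1 - \<theta>) * (\<theta> / c) \<le> (1 - \<theta>) * t" using E L1 rhs by (simp add: algebra_simps)
    qed
    then have tE: "t = \<theta> / c" using assms(5) by (metis mult_cancel_left eq_iff_diff_eq_0 less_irrefl)
    have SE: "S = real k / c" using E tE cpos by (simp add: field_simps)
    have QE: "Q = real k / c\<^sup>2"
    proof -
      have "Q = 1 - \<theta>\<^sup>2 / c\<^sup>2" using Qt tE by (simp add: power_divide)
      also have "\<dots> = (c\<^sup>2 - \<theta>\<^sup>2) / c\<^sup>2" using cpos by (simp add: field_simps)
      also have "\<dots> = real k / c\<^sup>2" using c2 by simp
      finally show ?thesis .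
    qed
    have "S\<^sup>2 / real k = real k / c\<^sup>2" using SE kpos by (simp add: power_divide power2_eq_square)
    then have "Q - S\<^sup>2 / real k = 0" using QE by simp
    then have "(\<Sum>j=1..k. (\<sigma> j - S / real k)\<^sup>2) = 0" using vid by simp
    then have "\<forall>j\<in>{1..k}. (\<sigma> j - S / real k)\<^sup>2 = 0"
      by (subst (asm) sum_nonneg_eq_0_iff) auto
    then have "\<forall>j\<in>{1..k}. \<sigma> j = 1 / c" using SE kpos by auto
    then show "(\<forall>j\<in>{1..k}. \<sigma> j = 1 / c) \<and> t = \<theta> / c" using tE by simp
  next
    assume "(\<forall>j\<in>{1..k}. \<sigma> j = 1 / c) \<and> t = \<theta> / c"
    then have "S = real k / c" "t = \<theta> / c" unfolding S_def by simp_all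
    then show "S + t = (real k + \<theta>) / c" by (simp add: add_divide_distrib)
  qed
  show ?thesis using main eqiff sumeq unfolding c_def t_def by simp
qed

end
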